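(* Let $b\ge 2$ and $n\ge 0$ be integers. Then $b\,s_{n+1}\notin \mathrm{Ap}(T_b(n),s_0)$.
   Context: For integers $b\ge 2$, $n\ge 0$, $i\ge0$ put $s_i=(b+1)b^{n+i}-1$ and $T_b(n)=\langle\{s_i:i\in\mathbb{N}\}\rangle$ (a numerical semigroup). For a numerical semigroup $S$ and $x\in S\setminus\{0\}$, $\mathrm{Ap}(S,x)=\{s\in S: s-x\notin S\}$. *)

theory Defs
  imports Main
begin

inductive_set gen_monoid :: "nat set \<Rightarrow> nat set" for A :: "nat set" where
  zero: "0 \<in> gen_monoid A"
| add_gen: "a \<in> A \<Longrightarrow> x \<in> gen_monoid A \<Longrightarrow> a + x \<in> gen_monoid A"

definition s_seq :: "nat \<Rightarrow> nat \<Rightarrow> nat \<Rightarrow> nat" where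
  "s_seq b n i = (b + 1) * b ^ (n + i) - 1"

definition T_sg :: "nat \<Rightarrow> nat \<Rightarrow> nat set" where
  "T_sg b n = gen_monoid (range (s_seq b n))"

text \<open>Apery set: elements s of S with s - x not in S (as an integer; negative values are not in S).\<close>
definition Apery :: "nat set \<Rightarrow> nat \<Rightarrow> nat set" where
  "Apery S x = {s \<in> S. \<not> (x \<le> s \<and> s - x \<in> S)}"

end

theory Submission
  imports Defs
begin

lemma gm_mult: "a \<in> A \<Longrightarrow> x \<in> gen_monoid A \<Longrightarrow> m * a + x \<in> gen_monoid A"
proof (induction m)
  case 0 then show ?case by simp
next
  case (Suc m)
  then have "a + (m * a + x) \<in> gen_monoid A" by (simp add: gen_monoid.add_gen)
  then show ?case by (simp add: add.assoc)
qed

lemma key_int: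
  fixes b B :: int
  shows "b * ((b+1)*B*B*b - 1) - ((b+1)*B - 1)
       = ((b+1)*B*B - 1) + (B*(b*b - 1) + b - 2) * ((b+1)*B - 1)"
  by (simp add: algebra_simps)

theorem mainTheorem9:
  fixes b n :: nat
  assumes "b \<ge> 2"
  shows "b * s_seq b n (n + 1) \<notin> Apery (T_sg b n) (s_seq b n 0)"
proof -
  define B where "B = b ^ n"
  have B1: "B \<ge> 1" using assms by (simp add: B_def)
  have e1: "s_seq b n (n+1) = (b+1)*B*B*b - 1"
  proof -
    have "b ^ (n + (n+1)) = B*B*b" by (simp add: B_def power_add)
    thus ?thesis unfolding s_seq_def by (simp only: mult.assoc)
  qed
  have e0: "s_seq b n 0 = (b+1)*B - 1" by (simp add: s_seq_def B_def)
  have en: "s_seq b n n = (b+1)*B*B - 1"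
    by (simp add: s_seq_def B_def power_add algebra_simps)
  define k where "k = B*(b*b - 1) + b - 2"
  have p1: "(b+1)*B*B*b \<ge> 1" using B1 assms by simp
  have p0: "(b+1)*B \<ge> 1" using B1 by simp
  have pn: "(b+1)*B*B \<ge> 1" using B1 by simp
  have pb: "b*b \<ge> 1" using assms by simp
  have pk: "B*(b*b - 1) + b \<ge> 2" using assms by simp
  have le: "(b+1)*B - 1 \<le> b * ((b+1)*B*B*b - 1)"
  proof -
    have "B*b \<ge> 1" using B1 assms by simp
    hence "(b+1)*B*1 \<le> (b+1)*B*(B*b)" by (intro mult_le_mono2)
    hence "(b+1)*B - 1 \<le> (b+1)*B*B*b - 1" by (simp only: mult.assoc mult_1_right diff_le_mono)
    also have "\<dots> \<le> b * ((b+1)*B*B*b - 1)" using assms by simp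
    finally show ?thesis .
  qed
  have eq: "b * ((b+1)*B*B*b - 1) - ((b+1)*B - 1)
       = ((b+1)*B*B - 1) + k * ((b+1)*B - 1)"
  proof -
    have i1: "int ((b+1)*B*B*b - 1) = (int b+1)*int B*int B*int b - 1"
      using p1 by (simp add: of_nat_diff algebra_simps)
    have i0: "int ((b+1)*B - 1) = (int b+1)*int B - 1"
      using p0 by (simp add: of_nat_diff algebra_simps)
    have i2: "int ((b+1)*B*B - 1) = (int b+1)*int B*int B - 1"
      using pn by (simp add: of_nat_diff algebra_simps)
    have ik: "int k = int B*(int b*int b - 1) + int b - 2"
      using pb pk unfolding k_def by (simp add: of_nat_diff algebra_simps)
    have "int (b * ((b+1)*B*B*b - 1) - ((b+1)*B - 1))
        = int b * int ((b+1)*B*B*b - 1) - int ((b+1)*B - 1)"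
      by (simp only: of_nat_diff[OF le] of_nat_mult)
    also have "\<dots> = int (((b+1)*B*B - 1) + k * ((b+1)*B - 1))"
      unfolding of_nat_add of_nat_mult i1 i0 i2 ik by (rule key_int)
    finally have "int (b * ((b+1)*B*B*b - 1) - ((b+1)*B - 1))
       = int (((b+1)*B*B - 1) + k * ((b+1)*B - 1))" .
    thus ?thesis by linarith
  qed
  have g0: "s_seq b n 0 \<in> range (s_seq b n)" by simp
  have gn: "s_seq b n n \<in> range (s_seq b n)" by simp
  have "s_seq b n n + 0 \<in> gen_monoid (range (s_seq b n))"
    by (rule gen_monoid.add_gen[OF gn gen_monoid.zero])
  hence "k * s_seq b n 0 + s_seq b n n \<in> gen_monoid (range (s_seq b n))"
    using gm_mult[OF g0] by simp
  hence "b * s_seq b n (n + 1) - s_seq b n 0 \<in> T_sg b n"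
    unfolding T_sg_def using eq e1 e0 en by (simp add: add.commute)
  moreover have "s_seq b n 0 \<le> b * s_seq b n (n + 1)" using le e1 e0 by simp
  ultimately show ?thesis by (simp add: Apery_def)
qed

end
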